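(* Let $A$ be a Banach algebra with a bounded left approximate identity, let $X$ be a Banach space, and let $\varphi\colon A\to\mathcal{B}(X)$ be a representation. If for every $x\in X$ the orbit map $A\to X$, $a\mapsto\varphi(a)x$, is weakly compact, then the essential space of $\varphi$ is complemented in $X$.
   Context: A representation is a bounded linear multiplicative map. The essential space of $\varphi$ is the closed linear span of $\{\varphi(a)x: a\in A, x\in X\}$. A closed subspace is complemented if it is the image of some bounded idempotent operator on $X$. *)

theory Defs
  imports "HOL-Analysis.Analysis"
begin

definition weak_topology :: "'x::real_normed_vector topology" where
  "weak_topology = topology_generated_by
     {f -` U | (f :: 'x \<Rightarrow> real) U. bounded_linear f \<and> open U}"

definition weakly_compact_operator :: "('a::real_normed_vector \<Rightarrow> 'x::real_normed_vector) \<Rightarrow> bool" where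
  "weakly_compact_operator T \<longleftrightarrow> bounded_linear T \<and>
     compactin weak_topology (weak_topology closure_of (T ` cball 0 1))"

text \<open>A bounded left approximate identity: a bounded net (e) with e*a \<rightarrow> a for all a.
  A net is represented by its image filter on the algebra.\<close>
definition has_bounded_left_approx_identity :: "'a::real_normed_algebra itself \<Rightarrow> bool" where
  "has_bounded_left_approx_identity _ \<longleftrightarrow>
     (\<exists>(F :: 'a filter) K. F \<noteq> bot \<and> (\<forall>\<^sub>F e in F. norm e \<le> K) \<and>
        (\<forall>a. ((\<lambda>e. e * a) \<longlongrightarrow> a) F))"

definition representation :: "('a::real_normed_algebra \<Rightarrow> ('x::real_normed_vector \<Rightarrow>\<^sub>L 'x)) \<Rightarrow> bool" where
  "representation \<phi> \<longleftrightarrow> bounded_linear \<phi> \<and> (\<forall>a b. \<phi> (a * b) = \<phi> a o\<^sub>L \<phi> b)"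

definition essential_space :: "('a \<Rightarrow> ('x::real_normed_vector \<Rightarrow>\<^sub>L 'x)) \<Rightarrow> 'x set" where
  "essential_space \<phi> = closure (span {\<phi> a x | a x. True})"

definition complemented :: "'x::real_normed_vector set \<Rightarrow> bool" where
  "complemented Y \<longleftrightarrow> (\<exists>P :: 'x \<Rightarrow>\<^sub>L 'x. P o\<^sub>L P = P \<and> range (blinfun_apply P) = Y)"

end

theory Submission
  imports Defs
begin

definition lg :: "real \<Rightarrow> ('x::real_normed_vector \<times> real) set \<Rightarrow> bool" where
  "lg C G \<longleftrightarrow> (0,0) \<in> G \<and>
     (\<forall>x a y b. (x,a)\<in>G \<longrightarrow> (y,b)\<in>G \<longrightarrow> (x+y, a+b) \<in> G) \<and>
     (\<forall>x a c. (x,a)\<in>G \<longrightarrow> (c *\<^sub>R x, c*a) \<in> G) \<and>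
     (\<forall>x a b. (x,a)\<in>G \<longrightarrow> (x,b)\<in>G \<longrightarrow> a = b) \<and>
     (\<forall>x a. (x,a)\<in>G \<longrightarrow> a \<le> C * norm x)"

lemma lg_zero: "lg C G \<Longrightarrow> (0,0) \<in> G" unfolding lg_def by (elim conjE)
lemma lg_add: "lg C G \<Longrightarrow> (x,a)\<in>G \<Longrightarrow> (y,b)\<in>G \<Longrightarrow> (x+y, a+b) \<in> G" unfolding lg_def by (elim conjE) fast
lemma lg_scale: "lg C G \<Longrightarrow> (x,a)\<in>G \<Longrightarrow> (r *\<^sub>R x, r*a) \<in> G" unfolding lg_def by (elim conjE) fast
lemma lg_fun: "lg C G \<Longrightarrow> (x,a)\<in>G \<Longrightarrow> (x,b)\<in>G \<Longrightarrow> a = b" unfolding lg_def by (elim conjE) fast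
lemma lg_bd: "lg C G \<Longrightarrow> (x,a)\<in>G \<Longrightarrow> a \<le> C * norm x" unfolding lg_def by (elim conjE) fast

lemma lg_chain:
  assumes "c \<in> chains {G. lg C G \<and> G0 \<subseteq> G}" "c \<noteq> {}"
  shows "lg C (\<Union>c)"
proof -
  have cm: "\<exists>G\<in>c. G1 \<subseteq> G \<and> G2 \<subseteq> G" if "G1 \<in> c" "G2 \<in> c" for G1 G2
    using chainsD[OF assms(1) that] that by blast
  have l: "lg C G" if "G \<in> c" for G using chainsD2[OF assms(1)] that by blast
  show ?thesis unfolding lg_def
  proof (intro conjI allI impI)
    obtain G where "G \<in> c" using assms(2) by blast
    then show "(0,0) \<in> \<Union>c" using lg_zero[OF l] by blast
  next
    fix x a y b assume "(x,a) \<in> \<Union>c" "(y,b) \<in> \<Union>c"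
    then obtain G1 G2 where "G1 \<in> c" "G2 \<in> c" "(x,a)\<in>G1" "(y,b)\<in>G2" by blast
    then obtain G where "G\<in>c" "(x,a)\<in>G" "(y,b)\<in>G" using cm by blast
    then show "(x+y,a+b) \<in> \<Union>c" using lg_add[OF l] by blast
  next
    fix x a y b assume "(x,a) \<in> \<Union>c" "(x,b) \<in> \<Union>c"
    then obtain G1 G2 where "G1 \<in> c" "G2 \<in> c" "(x,a)\<in>G1" "(x,b)\<in>G2" by blast
    then obtain G where "G\<in>c" "(x,a)\<in>G" "(x,b)\<in>G" using cm by blast
    then show "a = b" using lg_fun[OF l] by blast
  next
    fix x a r assume "(x,a) \<in> \<Union>c"
    then obtain G where "G\<in>c" "(x,a)\<in>G" by blast
    then show "(r *\<^sub>R x, r*a) \<in> \<Union>c" using lg_scale[OF l] by blast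
  next
    fix x a assume "(x,a) \<in> \<Union>c"
    then obtain G where "G\<in>c" "(x,a)\<in>G" by blast
    then show "a \<le> C * norm x" using lg_bd[OF l] by blast
  qed
qed

lemma lg_extend:
  fixes M :: "('x::real_normed_vector \<times> real) set"
  assumes lgM: "lg C M" and C: "C \<ge> 0" and x0: "x0 \<notin> Domain M"
  shows "\<exists>G. lg C G \<and> M \<subseteq> G \<and> G \<noteq> M"
proof -
  have z: "(0,0) \<in> M" and ad: "\<And>x a y b. (x,a)\<in>M \<Longrightarrow> (y,b)\<in>M \<Longrightarrow> (x+y, a+b) \<in> M"
    and sc: "\<And>x a r. (x,a)\<in>M \<Longrightarrow> (r *\<^sub>R x, r*a) \<in> M"
    and fn: "\<And>x a b. (x,a)\<in>M \<Longrightarrow> (x,b)\<in>M \<Longrightarrow> a = b"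
    and bd: "\<And>x a. (x,a)\<in>M \<Longrightarrow> a \<le> C * norm x"
    using lg_zero[OF lgM] lg_add[OF lgM] lg_scale[OF lgM] lg_fun[OF lgM] lg_bd[OF lgM] by auto
  define S where "S = (\<lambda>p. snd p - C * norm (fst p - x0)) ` M"
  define c where "c = Sup S"
  have key: "a - C * norm (u - x0) \<le> C * norm (v + x0) - b" if "(u,a)\<in>M" "(v,b)\<in>M" for u a v b
  proof -
    have "a + b \<le> C * norm (u + v)" using bd[OF ad[OF that]] .
    moreover have "norm (u+v) \<le> norm (u - x0) + norm (v + x0)"
      using norm_triangle_ineq[of "u - x0" "v + x0"] by simp
    then have "C * norm (u+v) \<le> C * (norm (u - x0) + norm (v + x0))"
      by (rule mult_left_mono[OF _ C])
    then have "C * norm (u+v) \<le> C * norm (u - x0) + C * norm (v + x0)"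
      by (simp add: distrib_left)
    ultimately show ?thesis by linarith
  qed
  have Sne: "S \<noteq> {}" using z unfolding S_def by blast
  have Sbd: "bdd_above S"
  proof (rule bdd_aboveI)
    fix s assume "s \<in> S"
    then obtain p where pM: "p \<in> M" and se: "s = snd p - C * norm (fst p - x0)" unfolding S_def by (rule imageE)
    have "snd p - C * norm (fst p - x0) \<le> C * norm (0 + x0) - 0"
      by (rule key) (use pM z in simp_all)
    then show "s \<le> C * norm x0" unfolding se by simp
  qed
  have lo: "a - C * norm (u - x0) \<le> c" if "(u,a)\<in>M" for u a
  proof -
    have "snd (u,a) - C * norm (fst (u,a) - x0) \<in> S" unfolding S_def using that by (rule imageI)
    then show ?thesis unfolding c_def using Sbd by (simp add: cSup_upper)
  qed
  have hi: "c \<le> C * norm (v + x0) - b" if "(v,b)\<in>M" for v b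
    unfolding c_def
  proof (rule cSup_least[OF Sne])
    fix s assume "s \<in> S"
    then obtain p where pM: "p \<in> M" and se: "s = snd p - C * norm (fst p - x0)" unfolding S_def by (rule imageE)
    show "s \<le> C * norm (v + x0) - b" unfolding se by (rule key) (use pM that in simp_all)
  qed
  define G where "G = {(y + t *\<^sub>R x0, b + t*c) | y b t. (y,b) \<in> M}"
  have inj: "t = t' \<and> y = y'" if "(y,b)\<in>M" "(y',b')\<in>M" "y + t *\<^sub>R x0 = y' + t' *\<^sub>R x0" for y b y' b' t t'
  proof (rule ccontr)
    assume ne: "\<not> (t = t' \<and> y = y')"
    then have "t \<noteq> t'" using that(3) by auto
    have "(y + (-1) *\<^sub>R y', b + (-1)*b') \<in> M" using ad[OF that(1) sc[OF that(2)]] .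
    then have "((1/(t'-t)) *\<^sub>R (y - y'), (1/(t'-t)) * (b - b')) \<in> M" using sc by fastforce
    moreover have "(1/(t'-t)) *\<^sub>R (y - y') = x0"
    proof -
      have "y - y' = (t' - t) *\<^sub>R x0" using that(3) by (simp add: algebra_simps)
      then show ?thesis using \<open>t \<noteq> t'\<close> by simp
    qed
    ultimately show False using x0 by (metis Domain.DomainI)
  qed
  have "lg C G" unfolding lg_def
  proof (intro conjI allI impI)
    show "(0,0) \<in> G" unfolding G_def using z by force
  next
    fix x a y b assume "(x,a)\<in>G" "(y,b)\<in>G"
    then obtain y1 b1 t1 y2 b2 t2 where h: "(y1,b1)\<in>M" "(y2,b2)\<in>M" "x = y1 + t1 *\<^sub>R x0" "a = b1 + t1*c"
       "y = y2 + t2 *\<^sub>R x0" "b = b2 + t2*c" unfolding G_def by blast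
    show "(x+y,a+b) \<in> G" unfolding G_def
      by (rule CollectI, rule exI[of _ "y1+y2"], rule exI[of _ "b1+b2"], rule exI[of _ "t1+t2"])
         (use h ad in \<open>auto simp: algebra_simps\<close>)
  next
    fix x a r assume "(x,a)\<in>G"
    then obtain y1 b1 t1 where h: "(y1,b1)\<in>M" "x = y1 + t1 *\<^sub>R x0" "a = b1 + t1*c" unfolding G_def by blast
    show "(r *\<^sub>R x, r*a) \<in> G" unfolding G_def
      by (rule CollectI, rule exI[of _ "r *\<^sub>R y1"], rule exI[of _ "r*b1"], rule exI[of _ "r*t1"])
         (use h sc in \<open>auto simp: algebra_simps\<close>)
  next
    fix x a b assume "(x,a)\<in>G" "(x,b)\<in>G"
    then obtain y1 b1 t1 y2 b2 t2 where h: "(y1,b1)\<in>M" "(y2,b2)\<in>M" "x = y1 + t1 *\<^sub>R x0" "a = b1 + t1*c"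
       "x = y2 + t2 *\<^sub>R x0" "b = b2 + t2*c" unfolding G_def by blast
    then have "t1 = t2 \<and> y1 = y2" using inj by metis
    then show "a = b" using h fn by metis
  next
    fix x a assume "(x,a)\<in>G"
    then obtain y b t where h: "(y,b)\<in>M" "x = y + t *\<^sub>R x0" "a = b + t*c" unfolding G_def by blast
    show "a \<le> C * norm x"
    proof (cases "t = 0")
      case True then show ?thesis using h bd by simp
    next
      case False
      have m: "((1/t) *\<^sub>R y, (1/t)*b) \<in> M" using sc[OF h(1)] .
      show ?thesis
      proof (cases "t > 0")
        case True
        have "c \<le> C * norm ((1/t) *\<^sub>R y + x0) - (1/t)*b" using hi[OF m] .
        then have "t*c \<le> t * (C * norm ((1/t) *\<^sub>R y + x0) - (1/t)*b)"
          using True by (intro mult_left_mono) auto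
        also have "\<dots> = t * (C * norm ((1/t) *\<^sub>R y + x0)) - b" using False by (simp add: right_diff_distrib)
        finally have "t*c \<le> t * (C * norm ((1/t) *\<^sub>R y + x0)) - b" .
        moreover have "t * norm ((1/t) *\<^sub>R y + x0) = norm x"
        proof -
          have "t *\<^sub>R ((1/t) *\<^sub>R y + x0) = x" using h False by (simp add: algebra_simps)
          then show ?thesis using True by (metis norm_scaleR abs_of_pos)
        qed
        ultimately show ?thesis using h by (simp add: algebra_simps)
      next
        case neg: False
        then have tn: "t < 0" using \<open>t \<noteq> 0\<close> by simp
        have m2: "((-1/t) *\<^sub>R y, (-1/t)*b) \<in> M" using sc[OF h(1)] .
        have "(-1/t)*b - C * norm ((-1/t) *\<^sub>R y - x0) \<le> c" using lo[OF m2] .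
        then have "(-t) * ((-1/t)*b - C * norm ((-1/t) *\<^sub>R y - x0)) \<le> (-t) * c" using tn
          by (intro mult_left_mono) auto
        moreover have "(-t) * norm ((-1/t) *\<^sub>R y - x0) = norm x"
        proof -
          have "(-t) *\<^sub>R ((-1/t) *\<^sub>R y - x0) = x" using h tn by (simp add: algebra_simps)
          then show ?thesis using tn by (metis norm_scaleR abs_of_pos neg_0_less_iff_less)
        qed
        moreover have "(-t) * ((-1/t)*b - C * norm ((-1/t) *\<^sub>R y - x0)) = b - C * ((-t) * norm ((-1/t) *\<^sub>R y - x0))"
          using tn by (simp add: algebra_simps)
        ultimately have "b - C * norm x \<le> (-t) * c" by simp
        then show ?thesis using h by (simp add: algebra_simps)
      qed
    qed
  qed
  moreover have "M \<subseteq> G"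
  proof
    fix p assume "p \<in> M"
    then show "p \<in> G" unfolding G_def
      by (intro CollectI exI[of _ "fst p"] exI[of _ "snd p"] exI[of _ "0::real"]) auto
  qed
  moreover have "(x0, c) \<in> G" unfolding G_def
    using z by (intro CollectI exI[of _ "0"] exI[of _ "0::real"] exI[of _ "1::real"]) auto
  then have "G \<noteq> M" using x0 by auto
  moreover note this
  ultimately show ?thesis by blast
qed

lemma hb_graph:
  fixes G0 :: "('x::real_normed_vector \<times> real) set"
  assumes "lg C G0" "C \<ge> 0"
  shows "\<exists>f. bounded_linear f \<and> (\<forall>y. \<bar>f y\<bar> \<le> C * norm y) \<and> (\<forall>y b. (y,b)\<in>G0 \<longrightarrow> f y = b)"
proof -
  define A where "A = {G. lg C G \<and> G0 \<subseteq> G}"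
  have "\<forall>c\<in>chains A. \<exists>U\<in>A. \<forall>X\<in>c. X \<subseteq> U"
  proof
    fix c assume c: "c \<in> chains A"
    show "\<exists>U\<in>A. \<forall>X\<in>c. X \<subseteq> U"
    proof (cases "c = {}")
      case True then show ?thesis using assms unfolding A_def by auto
    next
      case False
      have "\<Union>c \<in> A" using lg_chain[OF c[unfolded A_def] False] False chainsD2[OF c]
        unfolding A_def by blast
      then show ?thesis by blast
    qed
  qed
  from Zorn_Lemma2[OF this] obtain M where M: "M \<in> A" "\<And>X. X \<in> A \<Longrightarrow> M \<subseteq> X \<Longrightarrow> X = M" by blast
  have lgM: "lg C M" and G0M: "G0 \<subseteq> M" using M(1) unfolding A_def by auto
  have dom: "y \<in> Domain M" for y
  proof (rule ccontr)
    assume "y \<notin> Domain M"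
    from lg_extend[OF lgM assms(2) this] obtain G where "lg C G" "M \<subseteq> G" "G \<noteq> M" by blast
    then show False using M(2)[of G] G0M unfolding A_def by blast
  qed
  have ad: "\<And>x a y b. (x,a)\<in>M \<Longrightarrow> (y,b)\<in>M \<Longrightarrow> (x+y, a+b) \<in> M"
    and sc: "\<And>x a r. (x,a)\<in>M \<Longrightarrow> (r *\<^sub>R x, r*a) \<in> M"
    and fn: "\<And>x a b. (x,a)\<in>M \<Longrightarrow> (x,b)\<in>M \<Longrightarrow> a = b"
    and bd: "\<And>x a. (x,a)\<in>M \<Longrightarrow> a \<le> C * norm x"
    using lg_zero[OF lgM] lg_add[OF lgM] lg_scale[OF lgM] lg_fun[OF lgM] lg_bd[OF lgM] by auto
  define f where "f y = (SOME b. (y,b) \<in> M)" for y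
  have fM: "(y, f y) \<in> M" for y unfolding f_def using dom[of y] by (auto intro: someI)
  have fb: "\<bar>f y\<bar> \<le> C * norm y" for y
    using bd[OF fM[of y]] bd[OF sc[OF fM[of y], of "-1"]] by simp
  have "bounded_linear f"
  proof (rule bounded_linear_intro[where K=C])
    show "f (x + y) = f x + f y" for x y using fn[OF fM ad[OF fM fM]] .
    show "f (r *\<^sub>R x) = r *\<^sub>R f x" for r x using fn[OF fM sc[OF fM]] by simp
    show "norm (f x) \<le> norm x * C" for x using fb[of x] by (simp add: mult.commute)
  qed
  moreover have "(y,b)\<in>G0 \<Longrightarrow> f y = b" for y b using fn[OF fM, of y b] G0M by blast
  ultimately show ?thesis using fb by blast
qed

lemma hb_norming:
  fixes x :: "'x::real_normed_vector"
  shows "\<exists>f. bounded_linear f \<and> (\<forall>y. \<bar>f y\<bar> \<le> norm y) \<and> f x = norm x"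
proof (cases "x = 0")
  case True
  then show ?thesis by (intro exI[of _ "\<lambda>_. 0"]) (auto simp: bounded_linear_zero)
next
  case False
  define G0 where "G0 = {(t *\<^sub>R x, t * norm x) | t. True}"
  have "lg 1 G0" unfolding lg_def G0_def
  proof (intro conjI allI impI)
    show "(0, 0) \<in> {(t *\<^sub>R x, t * norm x) |t. True}" by (intro CollectI exI[of _ "0::real"]) auto
  next
    fix y a z b assume "(y, a) \<in> {(t *\<^sub>R x, t * norm x) |t. True}" "(z, b) \<in> {(t *\<^sub>R x, t * norm x) |t. True}"
    then obtain t s where "y = t *\<^sub>R x" "a = t * norm x" "z = s *\<^sub>R x" "b = s * norm x" by blast
    then show "(y + z, a + b) \<in> {(t *\<^sub>R x, t * norm x) |t. True}"
      by (intro CollectI exI[of _ "t+s"]) (auto simp: algebra_simps)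
  next
    fix y a r assume "(y, a) \<in> {(t *\<^sub>R x, t * norm x) |t. True}"
    then obtain t where "y = t *\<^sub>R x" "a = t * norm x" by blast
    then show "(r *\<^sub>R y, r * a) \<in> {(t *\<^sub>R x, t * norm x) |t. True}"
      by (intro CollectI exI[of _ "r*t"]) (auto simp: algebra_simps)
  next
    fix y a b assume "(y, a) \<in> {(t *\<^sub>R x, t * norm x) |t. True}" "(y, b) \<in> {(t *\<^sub>R x, t * norm x) |t. True}"
    then obtain t s where "y = t *\<^sub>R x" "a = t * norm x" "y = s *\<^sub>R x" "b = s * norm x" by blast
    then show "a = b" using False by (metis scaleR_cancel_right)
  next
    fix y a assume "(y, a) \<in> {(t *\<^sub>R x, t * norm x) |t. True}"
    then obtain t where "y = t *\<^sub>R x" "a = t * norm x" by blast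
    moreover have "t * norm x \<le> \<bar>t\<bar> * norm x" by (rule mult_right_mono) auto
    ultimately show "a \<le> 1 * norm y" by simp
  qed
  from hb_graph[OF this] obtain f where f: "bounded_linear f" "\<forall>y. \<bar>f y\<bar> \<le> 1 * norm y"
    "\<forall>y b. (y,b)\<in>G0 \<longrightarrow> f y = b" by auto
  have "(x, norm x) \<in> G0" unfolding G0_def by (intro CollectI exI[of _ "1::real"]) auto
  then show ?thesis using f by auto
qed

lemma hb_separate:
  fixes M :: "'x::real_normed_vector set"
  assumes "subspace M" "closed M" "x \<notin> M"
  shows "\<exists>f. bounded_linear f \<and> (\<forall>m\<in>M. f m = 0) \<and> f x = (1::real)"
proof -
  have "M \<noteq> {}" using assms(1) subspace_0 by blast
  then have d: "infdist x M > 0" using assms infdist_pos_not_in_closed by blast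
  define d where "d = infdist x M"
  have dp: "d > 0" using d d_def by simp
  define G0 where "G0 = {(m + t *\<^sub>R x, t) | m t. m \<in> M}"
  have inj: "t = s" if "m \<in> M" "n \<in> M" "m + t *\<^sub>R x = n + s *\<^sub>R x" for m n t s
  proof (rule ccontr)
    assume "t \<noteq> s"
    have e: "(t - s) *\<^sub>R x = n - m" using that(3) by (simp add: algebra_simps)
    have "(1/(t-s)) *\<^sub>R (n - m) = x" unfolding e[symmetric] using \<open>t \<noteq> s\<close> by simp
    then have "x = (1/(t-s)) *\<^sub>R (n - m)" by simp
    moreover have "(1/(t-s)) *\<^sub>R (n - m) \<in> M" using assms(1) that
      by (intro subspace_scale subspace_diff) auto
    ultimately show False using assms(3) by simp
  qed
  have "lg (1/d) G0" unfolding lg_def G0_def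
  proof (intro conjI allI impI)
    show "(0, 0) \<in> {(m + t *\<^sub>R x, t) |m t. m \<in> M}"
      using assms(1) by (intro CollectI exI[of _ 0] exI[of _ "0::real"]) (auto simp: subspace_0)
  next
    fix y a z b assume "(y, a) \<in> {(m + t *\<^sub>R x, t) |m t. m \<in> M}" "(z, b) \<in> {(m + t *\<^sub>R x, t) |m t. m \<in> M}"
    then obtain m t n s where "m\<in>M" "n\<in>M" "y = m + t *\<^sub>R x" "a = t" "z = n + s *\<^sub>R x" "b = s" by blast
    then show "(y + z, a + b) \<in> {(m + t *\<^sub>R x, t) |m t. m \<in> M}"
      using assms(1) by (intro CollectI exI[of _ "m+n"] exI[of _ "t+s"]) (auto simp: algebra_simps subspace_add)
  next
    fix y a r assume "(y, a) \<in> {(m + t *\<^sub>R x, t) |m t. m \<in> M}"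
    then obtain m t where "m\<in>M" "y = m + t *\<^sub>R x" "a = t" by blast
    then show "(r *\<^sub>R y, r * a) \<in> {(m + t *\<^sub>R x, t) |m t. m \<in> M}"
      using assms(1) by (intro CollectI exI[of _ "r *\<^sub>R m"] exI[of _ "r*t"]) (auto simp: algebra_simps subspace_scale)
  next
    fix y a b assume "(y, a) \<in> {(m + t *\<^sub>R x, t) |m t. m \<in> M}" "(y, b) \<in> {(m + t *\<^sub>R x, t) |m t. m \<in> M}"
    then obtain m t n s where "m\<in>M" "n\<in>M" "y = m + t *\<^sub>R x" "a = t" "y = n + s *\<^sub>R x" "b = s" by blast
    then show "a = b" using inj by metis
  next
    fix y a assume "(y, a) \<in> {(m + t *\<^sub>R x, t) |m t. m \<in> M}"
    then obtain m t where mt: "m\<in>M" "y = m + t *\<^sub>R x" "a = t" by blast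
    show "a \<le> 1 / d * norm y"
    proof (cases "t > 0")
      case False
      have "0 \<le> 1 / d * norm y" using dp by simp
      then show ?thesis using mt False by linarith
    next
      case True
      have "- ((1/t) *\<^sub>R m) \<in> M" using assms(1) mt by (intro subspace_neg subspace_scale) auto
      then have "d \<le> dist x (- ((1/t) *\<^sub>R m))" unfolding d_def by (rule infdist_le)
      also have "dist x (- ((1/t) *\<^sub>R m)) = norm ((1/t) *\<^sub>R y)"
        using True mt by (simp add: dist_norm algebra_simps)
      also have "\<dots> = norm y / t" using True by simp
      finally have "d * t \<le> norm y" using True by (simp add: field_simps)
      then show ?thesis using mt dp by (simp add: field_simps mult.commute)
    qed
  qed
  from hb_graph[OF this] dp obtain f where f: "bounded_linear f"
    "\<forall>y b. (y,b)\<in>G0 \<longrightarrow> f y = b" by auto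
  have "\<forall>m\<in>M. f m = 0"
  proof
    fix m assume "m \<in> M"
    then have "(m, 0) \<in> G0" unfolding G0_def by (intro CollectI exI[of _ m] exI[of _ "0::real"]) auto
    then show "f m = 0" using f by auto
  qed
  moreover have "(x, 1) \<in> G0" unfolding G0_def
    using assms(1) by (intro CollectI exI[of _ 0] exI[of _ "1::real"]) (auto simp: subspace_0)
  ultimately show ?thesis using f by (intro exI[of _ f]) auto
qed

lemma hb_eq:
  fixes u v :: "'x::real_normed_vector"
  assumes "\<And>f. bounded_linear f \<Longrightarrow> f u = (f v :: real)"
  shows "u = v"
proof -
  obtain f where f: "bounded_linear f" "f (u - v) = norm (u - v)" using hb_norming by blast
  have "f (u - v) = f u - f v" using f(1) by (simp add: linear_simps)
  then show ?thesis using f assms[OF f(1)] by simp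
qed

lemma subspace_closure_gen:
  fixes S :: "'x::real_normed_vector set"
  assumes "subspace S" shows "subspace (closure S)"
  unfolding subspace_def
proof (intro conjI ballI allI)
  show "0 \<in> closure S" using assms subspace_0 closure_subset by blast
next
  fix x y assume "x \<in> closure S" "y \<in> closure S"
  then obtain xs ys where "\<forall>n. xs n \<in> S" "xs \<longlonglongrightarrow> x" "\<forall>n. ys n \<in> S" "ys \<longlonglongrightarrow> y"
    unfolding closure_sequential by blast
  then show "x + y \<in> closure S" unfolding closure_sequential
    using assms by (intro exI[of _ "\<lambda>n. xs n + ys n"]) (auto intro: tendsto_add subspace_add)
next
  fix c x assume "x \<in> closure S"
  then obtain xs where "\<forall>n. xs n \<in> S" "xs \<longlonglongrightarrow> x" unfolding closure_sequential by blast
  then show "c *\<^sub>R x \<in> closure S" unfolding closure_sequential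
    using assms by (intro exI[of _ "\<lambda>n. c *\<^sub>R xs n"]) (auto intro: tendsto_scaleR subspace_scale)
qed

lemma weak_topspace [simp]: "topspace (weak_topology :: 'x::real_normed_vector topology) = UNIV"
proof -
  have "(\<lambda>_::'x. 0::real) -` UNIV \<in> {f -` U | (f :: 'x \<Rightarrow> real) U. bounded_linear f \<and> open U}"
    by (intro CollectI exI[of _ "\<lambda>_::'x. 0::real"] exI[of _ "UNIV::real set"]) (auto simp: bounded_linear_zero)
  then show ?thesis unfolding weak_topology_def topology_generated_by_topspace by auto
qed

lemma weak_cont:
  assumes "bounded_linear (f :: 'x::real_normed_vector \<Rightarrow> real)"
  shows "continuous_map weak_topology euclideanreal f"
  unfolding continuous_map_def
proof (intro conjI allI impI)
  show "f \<in> topspace weak_topology \<rightarrow> topspace euclideanreal" by simp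
next
  fix U :: "real set" assume "openin euclideanreal U"
  then have "open U" by simp
  have "{x \<in> topspace weak_topology. f x \<in> U} = f -` U" by auto
  also have "openin weak_topology (f -` U)" unfolding weak_topology_def
    using assms \<open>open U\<close> by (intro topology_generated_by_Basis) blast
  finally show "openin weak_topology {x \<in> topspace weak_topology. f x \<in> U}" .
qed

lemma prod_topspace [simp]: "topspace (product_topology (\<lambda>_::'x. weak_topology) UNIV) = (UNIV :: ('x::real_normed_vector \<Rightarrow> 'x) set)"
  by (simp add: PiE_UNIV_domain)

lemma eval_cont:
  assumes "bounded_linear (f :: 'x::real_normed_vector \<Rightarrow> real)"
  shows "continuous_map (product_topology (\<lambda>_::'x. weak_topology) UNIV) euclideanreal (\<lambda>q. f (q x))"
proof -
  have "continuous_map (product_topology (\<lambda>_::'x. weak_topology) UNIV) euclideanreal (f \<circ> (\<lambda>q. q x))"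
    by (rule continuous_map_compose[OF continuous_map_product_projection[of x UNIV "\<lambda>_. weak_topology"] weak_cont[OF assms]]) simp
  then show ?thesis by (simp add: o_def)
qed

theorem theoremB:
  fixes \<phi> :: "'a::{real_normed_algebra, banach} \<Rightarrow> ('x::banach \<Rightarrow>\<^sub>L 'x)"
  assumes "has_bounded_left_approx_identity TYPE('a)"
    and "representation \<phi>"
    and "\<forall>x. weakly_compact_operator (\<lambda>a. \<phi> a x)"
  shows "complemented (essential_space \<phi>)"
proof -
  obtain F :: "'a filter" and K where F: "F \<noteq> bot" "\<forall>\<^sub>F e in F. norm e \<le> K"
    "\<And>a. ((\<lambda>e. e * a) \<longlongrightarrow> a) F"
    using assms(1) unfolding has_bounded_left_approx_identity_def by blast
  have blphi: "bounded_linear \<phi>" and mult: "\<And>a b. \<phi> (a * b) = \<phi> a o\<^sub>L \<phi> b"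
    using assms(2) unfolding representation_def by auto
  obtain B where B: "B \<ge> 0" "\<And>a. norm (\<phi> a) \<le> norm a * B"
    using bounded_linear.nonneg_bounded[OF blphi] by blast
  have wc: "bounded_linear (\<lambda>a. blinfun_apply (\<phi> a) x)"
    "compactin weak_topology (weak_topology closure_of ((\<lambda>a. blinfun_apply (\<phi> a) x) ` cball 0 1))" for x
    using assms(3) unfolding weakly_compact_operator_def by auto
  define Kp where "Kp = max K 1"
  have Kp: "Kp > 0" "K \<le> Kp" unfolding Kp_def by auto
  define T where "T = product_topology (\<lambda>_::'x. weak_topology :: 'x topology) (UNIV :: 'x set)"
  define \<Phi> where "\<Phi> e = (\<lambda>x. blinfun_apply (\<phi> e) x)" for e
  define Kc where "Kc x = weak_topology closure_of ((\<lambda>a. blinfun_apply (\<phi> a) (Kp *\<^sub>R x)) ` cball 0 1)" for x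
  define Q where "Q = PiE UNIV Kc"
  have Qc: "compactin T Q" unfolding Q_def T_def compactin_PiE Kc_def using wc(2) by blast
  have PhiQ: "\<Phi> e \<in> Q" if "norm e \<le> K" for e
    unfolding Q_def PiE_UNIV_domain
  proof (rule Pi_I)
    fix x :: 'x
    let ?S = "(\<lambda>a. blinfun_apply (\<phi> a) (Kp *\<^sub>R x)) ` cball 0 1"
    have "blinfun_apply (\<phi> ((1/Kp) *\<^sub>R e)) (Kp *\<^sub>R x) = (1/Kp) *\<^sub>R blinfun_apply (\<phi> e) (Kp *\<^sub>R x)"
      by (rule linear.scaleR[OF bounded_linear.linear[OF wc(1)]])
    also have "\<dots> = (1/Kp) *\<^sub>R (Kp *\<^sub>R blinfun_apply (\<phi> e) x)"
      by (simp only: blinfun.scaleR_right)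
    also have "\<dots> = \<Phi> e x" using Kp by (simp add: \<Phi>_def)
    finally have eq: "\<Phi> e x = blinfun_apply (\<phi> ((1/Kp) *\<^sub>R e)) (Kp *\<^sub>R x)" by simp
    have "(1/Kp) *\<^sub>R e \<in> cball 0 1" using that Kp by (simp add: field_simps)
    then have "\<Phi> e x \<in> ?S" unfolding eq by (rule imageI)
    moreover have "?S \<subseteq> weak_topology closure_of ?S" by (rule closure_of_subset) simp
    ultimately show "\<Phi> e x \<in> Kc x" unfolding Kc_def by (rule subsetD[rotated])
  qed
  define U where "U = {T closure_of (\<Phi> ` E) | E. eventually (\<lambda>e. e \<in> E) F}"
  have "Q \<inter> \<Inter>U \<noteq> {}"
  proof (rule compactin_fip[THEN iffD1, OF Qc, THEN conjunct2, rule_format], intro conjI ballI allI impI)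
    fix C assume "C \<in> U"
    then show "closedin T C" unfolding U_def by auto
  next
    fix \<F> assume fin: "finite \<F> \<and> \<F> \<subseteq> U"
    define E where "E C = (SOME E. eventually (\<lambda>e. e \<in> E) F \<and> C = T closure_of (\<Phi> ` E))" for C
    have E: "eventually (\<lambda>e. e \<in> E C) F \<and> C = T closure_of (\<Phi> ` E C)" if "C \<in> \<F>" for C
    proof -
      have "\<exists>E. eventually (\<lambda>e. e \<in> E) F \<and> C = T closure_of (\<Phi> ` E)" using that fin unfolding U_def by blast
      then show ?thesis unfolding E_def by (rule someI_ex)
    qed
    have "eventually (\<lambda>e. \<forall>C\<in>\<F>. e \<in> E C) F" using fin E by (intro eventually_ball_finite) auto
    then have "eventually (\<lambda>e. (\<forall>C\<in>\<F>. e \<in> E C) \<and> norm e \<le> K) F" using F(2) by (rule eventually_conj)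
    then obtain e where e: "\<forall>C\<in>\<F>. e \<in> E C" "norm e \<le> K" using eventually_happens'[OF F(1)] by blast
    have "\<Phi> e \<in> C" if "C \<in> \<F>" for C
    proof -
      have "\<Phi> e \<in> \<Phi> ` E C" using e that by blast
      also have "\<Phi> ` E C \<subseteq> T closure_of (\<Phi> ` E C)" by (rule closure_of_subset) (simp add: T_def)
      finally show ?thesis using E[OF that] by simp
    qed
    then show "Q \<inter> \<Inter>\<F> \<noteq> {}" using PhiQ[OF e(2)] by blast
  qed
  then obtain p where pQ: "p \<in> Q" and pcl: "\<And>E. eventually (\<lambda>e. e \<in> E) F \<Longrightarrow> p \<in> T closure_of (\<Phi> ` E)"
    unfolding U_def by blast
  have L1: "g p \<in> S" if g: "continuous_map T euclideanreal g" and S: "closed S"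
     and ev: "eventually (\<lambda>e. g (\<Phi> e) \<in> S) F" for g S
  proof -
    have "p \<in> T closure_of (\<Phi> ` {e. g (\<Phi> e) \<in> S})" using ev by (intro pcl) simp
    also have "\<dots> \<subseteq> {q \<in> topspace T. g q \<in> S}"
      by (rule closure_of_minimal) (use g S closedin_continuous_map_preimage[OF g, of S] in \<open>auto simp: T_def\<close>)
    finally show ?thesis by simp
  qed
  have L2: "g p = L" if g: "continuous_map T euclideanreal g" and lim: "((\<lambda>e. g (\<Phi> e)) \<longlongrightarrow> L) F" for g L
  proof (rule ccontr)
    assume ne: "g p \<noteq> L"
    define d where "d = dist (g p) L / 2"
    have d: "d > 0" using ne by (simp add: d_def)
    have "eventually (\<lambda>e. dist (g (\<Phi> e)) L < d) F" using lim d by (simp add: tendsto_iff)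
    then have "eventually (\<lambda>e. g (\<Phi> e) \<in> cball L d) F"
      by (rule eventually_mono) (simp add: dist_commute)
    then have "g p \<in> cball L d" by (rule L1[OF g closed_cball])
    then show False using d by (simp add: d_def dist_commute)
  qed
  have evc: "continuous_map T euclideanreal (\<lambda>q. f (q x))" if "bounded_linear f" for f :: "'x \<Rightarrow> real" and x
    unfolding T_def by (rule eval_cont[OF that])
  have Padd: "p (x + y) = p x + p y" for x y
  proof (rule hb_eq)
    fix f :: "'x \<Rightarrow> real" assume f: "bounded_linear f"
    let ?g = "\<lambda>q. f (q (x + y)) - f (q x) - f (q y)"
    have gc: "continuous_map T euclideanreal ?g" by (intro continuous_map_diff evc f)
    have "\<And>e. ?g (\<Phi> e) = 0"
      by (simp add: \<Phi>_def blinfun.add_right linear_add[OF bounded_linear.linear[OF f]])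
    then have "((\<lambda>e. ?g (\<Phi> e)) \<longlongrightarrow> 0) F" by simp
    from L2[OF gc this] show "f (p (x + y)) = f (p x + p y)" by (simp add: linear_add[OF bounded_linear.linear[OF f]])
  qed
  have Pscale: "p (c *\<^sub>R x) = c *\<^sub>R p x" for c x
  proof (rule hb_eq)
    fix f :: "'x \<Rightarrow> real" assume f: "bounded_linear f"
    let ?g = "\<lambda>q. f (q (c *\<^sub>R x)) - c * f (q x)"
    have gc: "continuous_map T euclideanreal ?g"
      by (intro continuous_map_diff evc f continuous_map_real_mult continuous_map_const[THEN iffD2]) simp
    have "\<And>e. ?g (\<Phi> e) = 0"
      by (simp add: \<Phi>_def blinfun.scaleR_right linear_scale[OF bounded_linear.linear[OF f]])
    then have "((\<lambda>e. ?g (\<Phi> e)) \<longlongrightarrow> 0) F" by simp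
    from L2[OF gc this] show "f (p (c *\<^sub>R x)) = f (c *\<^sub>R p x)" by (simp add: linear_scale[OF bounded_linear.linear[OF f]])
  qed
  have Pbd: "norm (p x) \<le> norm x * (Kp * B)" for x
  proof -
    obtain f :: "'x \<Rightarrow> real" where f: "bounded_linear f" "\<forall>y. \<bar>f y\<bar> \<le> norm y" "f (p x) = norm (p x)"
      using hb_norming by blast
    have "f (\<Phi> e x) \<le> Kp * B * norm x" if "norm e \<le> K" for e
    proof -
      have "f (\<Phi> e x) \<le> norm (\<Phi> e x)" using f(2) by (meson abs_le_D1)
      also have "\<dots> \<le> norm (\<phi> e) * norm x" unfolding \<Phi>_def by (rule norm_blinfun)
      also have "\<dots> \<le> (norm e * B) * norm x" by (rule mult_right_mono[OF B(2)]) simp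
      also have "\<dots> \<le> (Kp * B) * norm x" using that Kp B(1)
        by (intro mult_right_mono) (auto intro: mult_right_mono)
      finally show ?thesis by simp
    qed
    then have "eventually (\<lambda>e. f (\<Phi> e x) \<in> {..Kp * B * norm x}) F"
      using F(2) by (auto elim: eventually_mono)
    from L1[OF evc[OF f(1)] closed_atMost this] show ?thesis using f(3) by (simp add: mult.commute)
  qed
  have Pl: "bounded_linear p"
    by (rule bounded_linear_intro[OF Padd Pscale Pbd])
  define S0 where "S0 = {blinfun_apply (\<phi> a) x | a x. True}"
  define Y where "Y = closure (span S0)"
  have Yess: "essential_space \<phi> = Y" unfolding essential_space_def Y_def S0_def by simp
  have subY: "subspace Y" unfolding Y_def by (intro subspace_closure_gen subspace_span)
  have S0Y: "S0 \<subseteq> Y" unfolding Y_def using span_superset closure_subset by blast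
  have PY: "p x \<in> Y" for x
  proof (rule ccontr)
    assume "p x \<notin> Y"
    then obtain f :: "'x \<Rightarrow> real" where f: "bounded_linear f" "\<forall>m\<in>Y. f m = 0" "f (p x) = 1"
      using hb_separate[OF subY _] unfolding Y_def by blast
    have "\<And>e. f (\<Phi> e x) = 0" using f(2) S0Y unfolding \<Phi>_def S0_def by blast
    then have "((\<lambda>e. f (\<Phi> e x)) \<longlongrightarrow> 0) F" by simp
    from L2[OF evc[OF f(1)] this] f(3) show False by simp
  qed
  have Pfix0: "p (blinfun_apply (\<phi> a) x) = blinfun_apply (\<phi> a) x" for a x
  proof (rule hb_eq)
    fix f :: "'x \<Rightarrow> real" assume f: "bounded_linear f"
    have bl: "bounded_linear (\<lambda>b. f (blinfun_apply (\<phi> b) x))"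
      using bounded_linear_compose[OF f wc(1)[of x]] .
    have "((\<lambda>e. f (blinfun_apply (\<phi> (e * a)) x)) \<longlongrightarrow> f (blinfun_apply (\<phi> a) x)) F"
      using bounded_linear.tendsto[OF bl F(3)[of a]] .
    moreover have "\<And>e. f (blinfun_apply (\<phi> (e * a)) x) = f (\<Phi> e (blinfun_apply (\<phi> a) x))"
      by (simp add: \<Phi>_def mult)
    ultimately have "((\<lambda>e. f (\<Phi> e (blinfun_apply (\<phi> a) x))) \<longlongrightarrow> f (blinfun_apply (\<phi> a) x)) F" by simp
    from L2[OF evc[OF f] this] show "f (p (blinfun_apply (\<phi> a) x)) = f (blinfun_apply (\<phi> a) x)" .
  qed
  define Fx where "Fx = {y. p y = y}"
  have "subspace Fx" unfolding subspace_def Fx_def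
    using Padd Pscale linear_0[OF bounded_linear.linear[OF Pl]] by auto
  moreover have "S0 \<subseteq> Fx" unfolding S0_def Fx_def using Pfix0 by auto
  ultimately have "span S0 \<subseteq> Fx" by (intro span_minimal)
  moreover have "closed Fx" unfolding Fx_def
    by (intro closed_Collect_eq linear_continuous_on Pl continuous_on_id)
  ultimately have YF: "Y \<subseteq> Fx" unfolding Y_def by (rule closure_minimal)
  have Pf: "p y = y" if "y \<in> Y" for y using YF that unfolding Fx_def by blast
  define Pb where "Pb = Blinfun p"
  have Pba: "blinfun_apply Pb = p" unfolding Pb_def by (rule bounded_linear_Blinfun_apply[OF Pl])
  have "Pb o\<^sub>L Pb = Pb" by (rule blinfun_eqI) (simp add: Pba Pf PY)
  moreover have "range (blinfun_apply Pb) = Y"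
  proof
    show "range (blinfun_apply Pb) \<subseteq> Y" using PY by (auto simp: Pba)
    show "Y \<subseteq> range (blinfun_apply Pb)"
    proof
      fix y assume "y \<in> Y"
      then have "y = blinfun_apply Pb y" using Pf by (simp add: Pba)
      then show "y \<in> range (blinfun_apply Pb)" by (rule range_eqI)
    qed
  qed
  ultimately show ?thesis unfolding complemented_def Yess by blast
qed

end
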